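(* Let $N\ge1$ be an integer and $\beta,\gamma,\xi,\eta,D,R>0$. Define, for $z>0$, $\bar C(z)=\dfrac{\gamma\xi R^2e^{-\frac{R^2}{4zD}-\eta z}}{8z^2D^2}$ and $g(t)=N\int_0^t\bar C(t-\tau)\,d\tau$. Then the equilibrium $(V,X)=(0,0)$ of the linear system $$\dot V=-\beta V-g(t)X,\qquad \dot X=V$$ is globally uniformly asymptotically stable with exponential rate of convergence.
   Context: This planar system is the linearization, written in centre-of-mass variables for each particle and each coordinate, of a hybrid model of $N$ particles in $\mathbb{R}^2$ with Cucker–Smale alignment (strength $\beta$) and chemotaxis towards a signal diffusing with coefficient $D$, degrading at rate $\eta$, produced at rate $\xi$ on discs of radius $R$, with chemotactic sensitivity $\gamma$. *)

theory Defs
  imports "HOL-Analysis.Analysis"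
begin

text \<open>Kernel C-bar(z) = gamma xi R^2 exp(-R^2/(4 z D) - eta z) / (8 z^2 D^2), for z > 0.
  (At z = 0 Isabelle's division convention gives 0, which is also the limit as z tends to 0+.)\<close>
definition Cbar :: "real \<Rightarrow> real \<Rightarrow> real \<Rightarrow> real \<Rightarrow> real \<Rightarrow> real \<Rightarrow> real" where
  "Cbar \<gamma> \<xi> \<eta> D R z =
     \<gamma> * \<xi> * R\<^sup>2 * exp (- (R\<^sup>2 / (4 * z * D)) - \<eta> * z) / (8 * z\<^sup>2 * D\<^sup>2)"

definition gfun :: "nat \<Rightarrow> real \<Rightarrow> real \<Rightarrow> real \<Rightarrow> real \<Rightarrow> real \<Rightarrow> real \<Rightarrow> real" where
  "gfun N \<gamma> \<xi> \<eta> D R t = real N * integral {0..t} (\<lambda>\<tau>. Cbar \<gamma> \<xi> \<eta> D R (t - \<tau>))"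

definition is_solution :: "real \<Rightarrow> (real \<Rightarrow> real) \<Rightarrow> real \<Rightarrow> (real \<Rightarrow> real) \<Rightarrow> (real \<Rightarrow> real) \<Rightarrow> bool" where
  "is_solution \<beta> g t0 V X \<longleftrightarrow>
     (\<forall>t\<ge>t0. (V has_real_derivative (- \<beta> * V t - g t * X t)) (at t within {t0..})
            \<and> (X has_real_derivative V t) (at t within {t0..}))"

end

theory Submission
  imports Defs "HOL-Real_Asymp.Real_Asymp"
begin

lemma comparison:
  fixes f f' :: "real \<Rightarrow> real"
  assumes ab: "a \<le> b"
    and der: "\<And>t. t \<in> {a..b} \<Longrightarrow> (f has_real_derivative f' t) (at t within {a..b})"
    and le: "\<And>t. t \<in> {a..b} \<Longrightarrow> f' t \<le> k * f t"
  shows "f b \<le> f a * exp (k * (b - a))"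
proof -
  define h where "h t = f t * exp (- k * (t - a))" for t
  have hd: "(h has_real_derivative (f' t * exp (- k * (t - a)) - k * (f t * exp (- k * (t - a))))) (at t within {a..b})"
    if "t \<in> {a..b}" for t
    unfolding h_def
    by (rule derivative_eq_intros der[OF that] refl)+ (simp add: algebra_simps)
  have "h b \<le> h a"
  proof (rule DERIV_nonpos_imp_decreasing_open[OF ab])
    show "continuous_on {a..b} h" using hd by (rule DERIV_continuous_on)
    fix x assume x: "a < x" "x < b"
    have "at x within {a..b} = at x"
      by (rule at_within_interior) (use x in auto)
    moreover have "f' x * exp (- k * (x - a)) - k * (f x * exp (- k * (x - a))) \<le> 0"
    proof -
      have "(f' x - k * f x) * exp (- k * (x - a)) \<le> 0"
        using le[of x] x by (intro mult_nonpos_nonneg) auto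
      then show ?thesis by (simp add: algebra_simps)
    qed
    ultimately show "\<exists>y. (h has_real_derivative y) (at x) \<and> y \<le> 0"
      using hd[of x] x by auto
  qed
  then have "f b * exp (- k * (b - a)) \<le> f a" by (simp add: h_def)
  then have "f b * exp (- k * (b - a)) * exp (k * (b - a)) \<le> f a * exp (k * (b - a))"
    by (intro mult_right_mono) auto
  then show ?thesis by (simp add: mult.assoc flip: exp_add)
qed

lemma lim0: "(B::real) > 0 \<Longrightarrow> ((\<lambda>z. exp (- (B / z) - e * z) / (z^2)) \<longlongrightarrow> 0) (at_right 0)"
  by real_asymp

lemma Cbar_nonneg:
  assumes "\<gamma> > 0" "\<xi> > 0" "D > 0"
  shows "0 \<le> Cbar \<gamma> \<xi> \<eta> D R z"
  using assms unfolding Cbar_def by (intro divide_nonneg_nonneg mult_nonneg_nonneg) auto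

lemma Cbar_pos:
  assumes "\<gamma> > 0" "\<xi> > 0" "D > 0" "R > 0" "z > 0"
  shows "0 < Cbar \<gamma> \<xi> \<eta> D R z"
  using assms unfolding Cbar_def by (intro divide_pos_pos mult_pos_pos) auto

lemma Cbar_alt:
  "Cbar \<gamma> \<xi> \<eta> D R z = \<gamma>*\<xi>*R^2/(8*D^2) * (exp (- ((R^2/(4*D)) / z) - \<eta> * z) / (z^2))"
  unfolding Cbar_def by (simp add: field_simps)

lemma Cbar_cont:
  assumes "D > 0" "R > 0"
  shows "continuous_on {0..} (Cbar \<gamma> \<xi> \<eta> D R)"
proof -
  have "continuous (at z within {0..}) (Cbar \<gamma> \<xi> \<eta> D R)" if "z \<ge> 0" for z
  proof (cases "z = 0")
    case True
    have B: "R^2/(4*D) > 0" using assms by simp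
    have "((\<lambda>z. exp (- ((R^2/(4*D)) / z) - \<eta> * z) / (z^2)) \<longlongrightarrow> 0) (at_right 0)"
      by (rule lim0[OF B])
    hence "((\<lambda>z. \<gamma>*\<xi>*R^2/(8*D^2) * (exp (- ((R^2/(4*D)) / z) - \<eta> * z) / (z^2))) \<longlongrightarrow> \<gamma>*\<xi>*R^2/(8*D^2) * 0) (at_right 0)"
      by (intro tendsto_mult tendsto_const)
    moreover have ce: "Cbar \<gamma> \<xi> \<eta> D R = (\<lambda>z. \<gamma>*\<xi>*R^2/(8*D^2) * (exp (- ((R^2/(4*D)) / z) - \<eta> * z) / (z^2)))"
      by (rule ext) (rule Cbar_alt)
    ultimately have "(Cbar \<gamma> \<xi> \<eta> D R \<longlongrightarrow> 0) (at_right 0)"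
      by simp
    moreover have "Cbar \<gamma> \<xi> \<eta> D R 0 = 0" by (simp add: Cbar_def)
    ultimately show ?thesis using True unfolding continuous_within by (simp add: at_within_Ici_at_right)
  next
    case False
    then have "isCont (Cbar \<gamma> \<xi> \<eta> D R) z" unfolding Cbar_def
      by (intro continuous_intros) (use assms in auto)
    then show ?thesis using continuous_at_imp_continuous_at_within by blast
  qed
  then show ?thesis using continuous_on_eq_continuous_within by blast
qed

lemma Cbar_int:
  assumes "D > 0" "R > 0" "0 \<le> a"
  shows "Cbar \<gamma> \<xi> \<eta> D R integrable_on {a..b}"
  by (rule integrable_continuous_interval, rule continuous_on_subset[OF Cbar_cont[OF assms(1,2)]])
     (use assms in auto)

lemma Cbar_bound:
  assumes "\<gamma> > 0" "\<xi> > 0" "D > 0" "R > 0" "z \<ge> 0"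
  shows "Cbar \<gamma> \<xi> \<eta> D R z \<le> (4*\<gamma>*\<xi>/R^2) * exp (- \<eta> * z)"
proof (cases "z = 0")
  case True then show ?thesis using assms by (simp add: Cbar_def)
next
  case False
  then have z: "z > 0" using assms by simp
  define B where "B = R^2/(4*D)"
  have B: "B > 0" using assms by (simp add: B_def)
  define u where "u = B / z"
  have u: "u > 0" using B z by (simp add: u_def)
  have "u^2/2 \<le> exp u" using exp_lower_Taylor_quadratic[of u] u by simp
  then have "exp (-u) \<le> 2 / u^2"
    using u by (simp add: exp_minus field_simps)
  also have "2 / u^2 = 2 * z^2 / B^2" using z B by (simp add: u_def field_simps)
  finally have e: "exp (- (B/z)) \<le> 2 * z^2 / B^2" by (simp add: u_def)
  have "Cbar \<gamma> \<xi> \<eta> D R z = \<gamma>*\<xi>*R^2/(8*D^2) * exp (- \<eta> * z) * (exp (- (B / z)) / z^2)"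
    by (simp add: Cbar_alt B_def exp_diff exp_minus field_simps)
  also have "\<dots> \<le> \<gamma>*\<xi>*R^2/(8*D^2) * exp (- \<eta> * z) * ((2 * z^2 / B^2) / z^2)"
    using e assms z by (intro mult_left_mono divide_right_mono) auto
  also have "\<dots> = (4*\<gamma>*\<xi>/R^2) * exp (- \<eta> * z)"
    using assms z by (simp add: B_def field_simps power2_eq_square)
  finally show ?thesis .
qed

lemma gfun_eq:
  assumes "t \<ge> 0"
  shows "gfun N \<gamma> \<xi> \<eta> D R t = real N * integral {0..t} (Cbar \<gamma> \<xi> \<eta> D R)"
proof -
  let ?c = "Cbar \<gamma> \<xi> \<eta> D R"
  have "integral {0..t} (\<lambda>\<tau>. ?c (t - \<tau>)) = integral {-t..0} (\<lambda>y. ?c (t + y))"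
    using Henstock_Kurzweil_Integration.integral_reflect_real[of 0 "-t" "\<lambda>y. ?c (t + y)"] by simp
  also have "\<dots> = integral {-t..0} (?c \<circ> (+) t)" by (simp add: o_def)
  also have "\<dots> = integral {0..t} ?c"
    using integral_shift_Icc_real[of "-t" 0 ?c t] by simp
  finally show ?thesis unfolding gfun_def by simp
qed

lemma h_mono:
  assumes "D > 0" "R > 0" "\<gamma> > 0" "\<xi> > 0" "0 \<le> s" "s \<le> t"
  shows "integral {0..s} (Cbar \<gamma> \<xi> \<eta> D R) \<le> integral {0..t} (Cbar \<gamma> \<xi> \<eta> D R)"
proof -
  have "integral {0..s} (Cbar \<gamma> \<xi> \<eta> D R) + integral {s..t} (Cbar \<gamma> \<xi> \<eta> D R) = integral {0..t} (Cbar \<gamma> \<xi> \<eta> D R)"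
    by (rule Henstock_Kurzweil_Integration.integral_combine) (use assms Cbar_int in auto)
  moreover have "0 \<le> integral {s..t} (Cbar \<gamma> \<xi> \<eta> D R)"
    by (rule integral_nonneg) (use assms Cbar_int Cbar_nonneg in auto)
  ultimately show ?thesis by linarith
qed

lemma h_nonneg:
  assumes "D > 0" "R > 0" "\<gamma> > 0" "\<xi> > 0" "0 \<le> t"
  shows "0 \<le> integral {0..t} (Cbar \<gamma> \<xi> \<eta> D R)"
  by (rule integral_nonneg) (use assms Cbar_int Cbar_nonneg in auto)

lemma h_bound:
  assumes "D > 0" "R > 0" "\<gamma> > 0" "\<xi> > 0" "\<eta> > 0" "0 \<le> t"
  shows "integral {0..t} (Cbar \<gamma> \<xi> \<eta> D R) \<le> 4*\<gamma>*\<xi>/R^2 / \<eta>"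
proof -
  define K where "K = 4*\<gamma>*\<xi>/R^2"
  have K: "K > 0" using assms by (simp add: K_def)
  define F where "F z = - (K/\<eta>) * exp (- \<eta> * z)" for z
  have hi: "((\<lambda>z. K * exp (- \<eta> * z)) has_integral (F t - F 0)) {0..t}"
  proof (rule fundamental_theorem_of_calculus[OF assms(6)])
    fix x assume "x \<in> {0..t}"
    have "(F has_real_derivative K * exp (- \<eta> * x)) (at x within {0..t})"
      unfolding F_def using assms
      by (auto intro!: derivative_eq_intros simp: field_simps)
    then show "(F has_vector_derivative K * exp (- \<eta> * x)) (at x within {0..t})"
      by (simp add: has_real_derivative_iff_has_vector_derivative)
  qed
  have i: "(\<lambda>z. K * exp (- \<eta> * z)) integrable_on {0..t}" "integral {0..t} (\<lambda>z. K * exp (- \<eta> * z)) = F t - F 0"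
    using hi by (rule has_integral_integrable, rule integral_unique)
  have "integral {0..t} (Cbar \<gamma> \<xi> \<eta> D R) \<le> integral {0..t} (\<lambda>z. K * exp (- \<eta> * z))"
    by (rule integral_le) (use assms Cbar_int i Cbar_bound in \<open>auto simp: K_def\<close>)
  also have "\<dots> = K/\<eta> - (K/\<eta>) * exp (- \<eta> * t)" using i by (simp add: F_def)
  also have "\<dots> \<le> K/\<eta>" using K assms by simp
  finally show ?thesis by (simp add: K_def)
qed

lemma h_pos:
  assumes "D > 0" "R > 0" "\<gamma> > 0" "\<xi> > 0"
  shows "0 < integral {0..1} (Cbar \<gamma> \<xi> \<eta> D R)"
proof -
  let ?c = "Cbar \<gamma> \<xi> \<eta> D R"
  obtain x where x: "x \<in> {1/2..1}" "\<And>y. y \<in> {1/2..1::real} \<Longrightarrow> ?c x \<le> ?c y"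
    using continuous_attains_inf[of "{1/2..1::real}" ?c]
      continuous_on_subset[OF Cbar_cont[OF assms(1,2)], of "{1/2..1}"] by auto
  have m: "?c x > 0" using x Cbar_pos assms by auto
  have "integral {0..1/2} ?c + integral {1/2..1} ?c = integral {0..1} ?c"
    by (rule Henstock_Kurzweil_Integration.integral_combine) (use assms Cbar_int in auto)
  moreover have "0 \<le> integral {0..1/2} ?c" using h_nonneg assms by auto
  moreover have "integral {1/2..1::real} (\<lambda>_. ?c x) \<le> integral {1/2..1} ?c"
    by (rule integral_le) (use assms Cbar_int x in auto)
  moreover have "integral {1/2..1::real} (\<lambda>_. ?c x) = ?c x / 2" by simp
  ultimately show ?thesis using m by linarith
qed

lemma alg_W_bounds:
  fixes v x L \<epsilon> :: real
  assumes "L > 0" "0 < \<epsilon>" "\<epsilon> \<le> 1" "\<epsilon> \<le> L"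
  shows "min 1 L / 2 * (v^2 + x^2) \<le> v^2 + L * x^2 + \<epsilon> * x * v"
    and "v^2 + L * x^2 + \<epsilon> * x * v \<le> 3/2 * max 1 L * (v^2 + x^2)"
proof -
  have s1: "0 \<le> (v + \<epsilon> * x)^2" "0 \<le> (v - \<epsilon> * x)^2" by auto
  then have c1: "- (v^2 + \<epsilon>^2 * x^2) \<le> 2 * (\<epsilon> * x * v)" "2 * (\<epsilon> * x * v) \<le> v^2 + \<epsilon>^2 * x^2"
    by (simp_all add: power2_eq_square algebra_simps)
  have "\<epsilon> * \<epsilon> \<le> \<epsilon> * 1" using assms by (intro mult_left_mono) auto
  then have e2: "\<epsilon>^2 \<le> L" using assms unfolding power2_eq_square by linarith
  have x1: "\<epsilon>^2 * x^2 \<le> L * x^2" by (rule mult_right_mono[OF e2]) simp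
  have m1: "min 1 L * v^2 \<le> v^2" by (rule mult_left_le_one_le) (use assms in auto)
  have m2: "min 1 L * x^2 \<le> L * x^2" by (rule mult_right_mono) (use assms in auto)
  show "min 1 L / 2 * (v^2 + x^2) \<le> v^2 + L * x^2 + \<epsilon> * x * v"
    using c1 x1 m1 m2 by (simp add: algebra_simps)
  have "1 * v^2 \<le> max 1 L * v^2" by (rule mult_right_mono) auto
  then have M1: "v^2 \<le> max 1 L * v^2" by simp
  have M2: "L * x^2 \<le> max 1 L * x^2" by (rule mult_right_mono) auto
  show "v^2 + L * x^2 + \<epsilon> * x * v \<le> 3/2 * max 1 L * (v^2 + x^2)"
    using c1 x1 M1 M2 by (simp add: algebra_simps)
qed

lemma alg_E:
  fixes v x gv L \<beta> :: real
  assumes "\<beta> > 0" "0 \<le> gv" "gv \<le> L"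
  shows "2 * v * (- \<beta> * v - gv * x) + 2 * x * v \<le> (1 + L) * (v^2 + x^2)"
proof -
  have "0 \<le> (\<bar>x\<bar> - \<bar>v\<bar>)^2" by simp
  then have a: "2 * \<bar>x * v\<bar> \<le> v^2 + x^2"
    by (simp add: power2_diff abs_mult)
  have "(1 - gv) * (2 * (x * v)) \<le> \<bar>(1 - gv) * (2 * (x * v))\<bar>" by (rule abs_ge_self)
  also have "\<dots> = \<bar>1 - gv\<bar> * (2 * \<bar>x * v\<bar>)" by (simp add: abs_mult)
  finally have b: "(1 - gv) * (2 * (x * v)) \<le> \<bar>1 - gv\<bar> * (2 * \<bar>x * v\<bar>)" .
  have c: "\<bar>1 - gv\<bar> * (2 * \<bar>x * v\<bar>) \<le> (1 + L) * (v^2 + x^2)"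
    using assms a by (intro mult_mono) auto
  have d: "- 2 * \<beta> * v^2 \<le> 0" using assms by simp
  show ?thesis using b c d by (simp add: algebra_simps power2_eq_square)
qed

lemma alg_W':
  fixes v x gv L \<beta> \<epsilon> :: real
  assumes "L > 0" "\<beta> > 0" "0 < \<epsilon>" "\<epsilon> \<le> \<beta>" "\<epsilon> * \<beta> \<le> L / 8" "L - \<epsilon> * \<beta> / 2 \<le> gv" "gv \<le> L"
  shows "2 * v * (- \<beta> * v - gv * x) + 2 * L * x * v + \<epsilon> * (v * v + x * (- \<beta> * v - gv * x))
           \<le> - min (\<beta>/2) (\<epsilon> * L / 4) * (v^2 + x^2)"
proof -
  define c where "c = 2 * (L - gv) - \<epsilon> * \<beta>"
  define p where "p = v^2"
  define q where "q = x^2"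
  define w where "w = \<bar>x * v\<bar>"
  have p: "p \<ge> 0" and q: "q \<ge> 0" and w: "w \<ge> 0" by (auto simp: p_def q_def w_def)
  have ce: "2 * v * (- \<beta> * v - gv * x) + 2 * L * x * v + \<epsilon> * (v * v + x * (- \<beta> * v - gv * x))
      = -(2*\<beta> - \<epsilon>) * p + c * (x * v) - \<epsilon> * gv * q"
    by (simp add: c_def p_def q_def algebra_simps power2_eq_square)
  have cabs: "\<bar>c\<bar> \<le> \<epsilon> * \<beta>" using assms by (simp add: c_def)
  have "c * (x * v) \<le> \<bar>c * (x * v)\<bar>" by (rule abs_ge_self)
  also have "\<dots> = \<bar>c\<bar> * w" by (simp add: abs_mult w_def)
  also have "\<dots> \<le> (\<epsilon> * \<beta>) * w" by (rule mult_right_mono[OF cabs w])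
  finally have c1: "c * (x * v) \<le> \<beta> * (\<epsilon> * w)" by (simp add: algebra_simps)
  have "0 \<le> (\<bar>v\<bar> - \<epsilon> * \<bar>x\<bar>)^2" by simp
  then have "2 * (\<epsilon> * w) \<le> p + \<epsilon>^2 * q"
    using assms by (simp add: power2_diff abs_mult w_def p_def q_def power_mult_distrib algebra_simps)
  then have "\<beta> * (2 * (\<epsilon> * w)) \<le> \<beta> * (p + \<epsilon>^2 * q)"
    using assms by (intro mult_left_mono) auto
  then have c2: "\<beta> * (\<epsilon> * w) \<le> (\<beta> * p) / 2 + (\<epsilon> * (\<epsilon> * \<beta>) * q) / 2"
    by (simp add: algebra_simps power2_eq_square)
  have "\<epsilon> * (\<epsilon> * \<beta>) * q \<le> \<epsilon> * (L/8) * q"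
    using assms q by (intro mult_right_mono mult_left_mono) auto
  then have c3: "\<epsilon> * (\<epsilon> * \<beta>) * q \<le> (\<epsilon> * L * q) / 8" by simp
  have "\<epsilon> * (L/2) * q \<le> \<epsilon> * gv * q"
    using assms q by (intro mult_right_mono mult_left_mono) auto
  then have c4: "(\<epsilon> * L * q) / 2 \<le> \<epsilon> * gv * q" by simp
  have c5: "\<epsilon> * p \<le> \<beta> * p" using assms p by (intro mult_right_mono) auto
  define \<kappa> where "\<kappa> = min (\<beta>/2) (\<epsilon> * L / 4)"
  have "\<kappa> * p \<le> (\<beta>/2) * p" using p by (intro mult_right_mono) (auto simp: \<kappa>_def)
  then have c6: "\<kappa> * p \<le> (\<beta> * p) / 2" by simp
  have "\<kappa> * q \<le> ((\<epsilon> * L) / 4) * q" using q by (intro mult_right_mono) (auto simp: \<kappa>_def)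
  then have c7: "\<kappa> * q \<le> (\<epsilon> * L * q) / 4" by simp
  have lin: "\<And>cxv bew bp eebq elq egq ep kp kq :: real. cxv \<le> bew \<Longrightarrow> bew \<le> bp/2 + eebq/2 \<Longrightarrow> eebq \<le> elq/8
     \<Longrightarrow> elq/2 \<le> egq \<Longrightarrow> ep \<le> bp \<Longrightarrow> kp \<le> bp/2 \<Longrightarrow> kq \<le> elq/4 \<Longrightarrow> 0 \<le> elq \<Longrightarrow> -(2*bp - ep) + cxv - egq \<le> -(kp + kq)"
    by linarith
  have e1: "-(2*\<beta> - \<epsilon>) * p + c * (x * v) - \<epsilon> * gv * q = -(2*(\<beta>*p) - \<epsilon>*p) + c * (x * v) - \<epsilon> * gv * q"
    by (simp add: algebra_simps)
  have e2: "- \<kappa> * (p + q) = -(\<kappa>*p + \<kappa>*q)" by (simp add: algebra_simps)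
  have "-(2*\<beta> - \<epsilon>) * p + c * (x * v) - \<epsilon> * gv * q \<le> - \<kappa> * (p + q)"
    unfolding e1 e2 by (rule lin[OF c1 c2 c3 c4 c5 c6 c7]) (use assms q in simp)
  then show ?thesis unfolding ce by (simp add: \<kappa>_def p_def q_def)
qed

theorem theorem5p2:
  fixes N :: nat and \<beta> \<gamma> \<xi> \<eta> D R :: real
  assumes "N \<ge> 1" and "\<beta> > 0" and "\<gamma> > 0" and "\<xi> > 0" and "\<eta> > 0" and "D > 0" and "R > 0"
  shows "\<exists>K r. K > 0 \<and> r > 0 \<and>
    (\<forall>t0 \<ge> 0. \<forall>V X. is_solution \<beta> (gfun N \<gamma> \<xi> \<eta> D R) t0 V X \<longrightarrow>
       (\<forall>t \<ge> t0. norm (V t, X t) \<le> K * exp (- r * (t - t0)) * norm (V t0, X t0)))"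
proof -
  define g where "g = gfun N \<gamma> \<xi> \<eta> D R"
  define G where "G = real N * (4*\<gamma>*\<xi>/R^2/\<eta>)"
  have Npos: "real N \<ge> 1" using assms(1) by simp
  have gmono: "g s \<le> g t" if "0 \<le> s" "s \<le> t" for s t
  proof -
    have "integral {0..s} (Cbar \<gamma> \<xi> \<eta> D R) \<le> integral {0..t} (Cbar \<gamma> \<xi> \<eta> D R)"
      using h_mono[of D R \<gamma> \<xi> s t \<eta>] that assms by simp
    then show ?thesis using that Npos by (simp add: g_def gfun_eq mult_left_mono)
  qed
  have gnn: "0 \<le> g t" if "0 \<le> t" for t
    using h_nonneg[of D R \<gamma> \<xi> t \<eta>] that assms by (simp add: g_def gfun_eq)
  have gbd: "g t \<le> G" if "0 \<le> t" for t
  proof -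
    have "integral {0..t} (Cbar \<gamma> \<xi> \<eta> D R) \<le> 4*\<gamma>*\<xi>/R^2/\<eta>"
      using h_bound[of D R \<gamma> \<xi> \<eta> t] that assms by simp
    then have "real N * integral {0..t} (Cbar \<gamma> \<xi> \<eta> D R) \<le> real N * (4*\<gamma>*\<xi>/R^2/\<eta>)"
      by (rule mult_left_mono) simp
    then show ?thesis using that by (simp only: g_def gfun_eq G_def)
  qed
  have g1: "0 < g 1"
    using h_pos[of D R \<gamma> \<xi> \<eta>] assms Npos by (simp add: g_def gfun_eq)
  define S where "S = g ` {0..}"
  have Sne: "S \<noteq> {}" by (simp add: S_def)
  have bdd: "bdd_above S" unfolding S_def by (rule bdd_aboveI2[where M = G]) (use gbd in auto)
  define L where "L = Sup S"
  have gL: "g t \<le> L" if "0 \<le> t" for t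
    unfolding L_def by (rule cSup_upper[OF _ bdd]) (use that in \<open>auto simp: S_def\<close>)
  have Lpos: "L > 0" using gL[of 1] g1 by simp
  define \<epsilon> where "\<epsilon> = min (min \<beta> 1) (min L (L/(8*\<beta>)))"
  have e0: "0 < \<epsilon>" using Lpos assms by (simp add: \<epsilon>_def)
  have e1: "\<epsilon> \<le> \<beta>" "\<epsilon> \<le> 1" "\<epsilon> \<le> L" by (auto simp: \<epsilon>_def)
  have "\<epsilon> \<le> L/(8*\<beta>)" by (simp add: \<epsilon>_def)
  then have e2: "\<epsilon> * \<beta> \<le> L/8" using assms by (simp add: field_simps)
  define \<delta> where "\<delta> = \<epsilon> * \<beta> / 2"
  have d0: "\<delta> > 0" using e0 assms by (simp add: \<delta>_def)
  have "L - \<delta> < Sup S" using d0 by (simp add: L_def)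
  then obtain T where T: "T \<ge> 0" "L - \<delta> < g T"
    unfolding less_cSup_iff[OF Sne bdd] by (auto simp: S_def)
  have gT: "L - \<delta> \<le> g t" if "T \<le> t" for t
    using gmono[of T t] T that by simp
  define m where "m = min 1 L / 2"
  define M where "M = 3/2 * max 1 L"
  define \<kappa> where "\<kappa> = min (\<beta>/2) (\<epsilon> * L / 4)"
  define k2 where "k2 = \<kappa> / M"
  define \<Lambda> where "\<Lambda> = 1 + L"
  define C where "C = M / m * exp (\<Lambda> * T) * exp (k2 * T)"
  have m0: "m > 0" using Lpos by (simp add: m_def)
  have M0: "M > 0" using Lpos by (simp add: M_def)
  have mM: "1 \<le> M / m" using Lpos m0 by (simp add: m_def M_def field_simps)
  have \<kappa>0: "\<kappa> > 0" using assms e0 Lpos by (simp add: \<kappa>_def)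
  have k20: "k2 > 0" using \<kappa>0 M0 by (simp add: k2_def)
  have C0: "C > 0" using m0 M0 by (simp add: C_def)
  show ?thesis
  proof (rule exI[of _ "sqrt C"], rule exI[of _ "k2/2"], intro conjI allI impI)
    show "sqrt C > 0" using C0 by simp
    show "k2/2 > 0" using k20 by simp
    fix t0 V X t
    assume t0: "t0 \<ge> 0" and sol: "is_solution \<beta> (gfun N \<gamma> \<xi> \<eta> D R) t0 V X" and tt0: "t0 \<le> t"
    have dV: "(V has_real_derivative (- \<beta> * V s - g s * X s)) (at s within {t0..})"
      and dX: "(X has_real_derivative V s) (at s within {t0..})" if "t0 \<le> s" for s
      using sol that unfolding is_solution_def g_def by auto
    define E where "E s = (V s)^2 + (X s)^2" for s
    define W where "W s = (V s)^2 + L * (X s)^2 + \<epsilon> * X s * V s" for s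
    have E0: "0 \<le> E s" for s by (simp add: E_def)
    have WE: "m * E s \<le> W s" "W s \<le> M * E s" for s
      using alg_W_bounds[OF Lpos e0 e1(2) e1(3), of "V s" "X s"]
      by (simp_all add: m_def M_def E_def W_def)
    have dE: "(E has_real_derivative (2 * V s * (- \<beta> * V s - g s * X s) + 2 * X s * V s)) (at s within {a..b})"
      if "t0 \<le> a" "s \<in> {a..b}" for s a b
    proof -
      have s: "t0 \<le> s" using that by auto
      have sub: "{a..b} \<subseteq> {t0..}" using that by auto
      show ?thesis unfolding E_def
        by (rule derivative_eq_intros DERIV_subset[OF dV[OF s] sub] DERIV_subset[OF dX[OF s] sub] refl)+
           (simp add: algebra_simps)
    qed
    have dW: "(W has_real_derivative (2 * V s * (- \<beta> * V s - g s * X s) + 2 * L * X s * V s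
                + \<epsilon> * (V s * V s + X s * (- \<beta> * V s - g s * X s)))) (at s within {a..b})"
      if "t0 \<le> a" "s \<in> {a..b}" for s a b
    proof -
      have s: "t0 \<le> s" using that by auto
      have sub: "{a..b} \<subseteq> {t0..}" using that by auto
      show ?thesis unfolding W_def
        by (rule derivative_eq_intros DERIV_subset[OF dV[OF s] sub] DERIV_subset[OF dX[OF s] sub] refl)+
           (simp add: algebra_simps)
    qed
    have ph1: "E t1 \<le> E t0 * exp (\<Lambda> * (t1 - t0))" if "t0 \<le> t1" for t1
    proof (rule comparison[OF that])
      fix s assume s: "s \<in> {t0..t1}"
      show "(E has_real_derivative (2 * V s * (- \<beta> * V s - g s * X s) + 2 * X s * V s)) (at s within {t0..t1})"
        by (rule dE[OF order_refl s])
      have "0 \<le> g s" "g s \<le> L" using gnn gL s t0 by auto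
      then show "2 * V s * (- \<beta> * V s - g s * X s) + 2 * X s * V s \<le> \<Lambda> * E s"
        using alg_E[OF assms(2), of "g s" L "V s" "X s"] by (simp add: \<Lambda>_def E_def)
    qed
    define T' where "T' = max t0 T"
    have ph2: "W t1 \<le> W T' * exp (- k2 * (t1 - T'))" if "T' \<le> t1" for t1
    proof (rule comparison[OF that])
      fix s assume s: "s \<in> {T'..t1}"
      show "(W has_real_derivative (2 * V s * (- \<beta> * V s - g s * X s) + 2 * L * X s * V s
                + \<epsilon> * (V s * V s + X s * (- \<beta> * V s - g s * X s)))) (at s within {T'..t1})"
        by (rule dW[OF _ s]) (simp add: T'_def)
      have gs: "L - \<epsilon> * \<beta> / 2 \<le> g s" "g s \<le> L"
        using gT[of s] gL[of s] s T by (auto simp: T'_def \<delta>_def)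
      have "2 * V s * (- \<beta> * V s - g s * X s) + 2 * L * X s * V s
                + \<epsilon> * (V s * V s + X s * (- \<beta> * V s - g s * X s)) \<le> - \<kappa> * E s"
        using alg_W'[OF Lpos assms(2) e0 e1(1) e2 gs, of "V s" "X s"] by (simp add: \<kappa>_def E_def)
      also have "\<dots> \<le> - k2 * W s"
      proof -
        have "\<kappa> / M * W s \<le> \<kappa> / M * (M * E s)"
          using WE(2)[of s] \<kappa>0 M0 by (intro mult_left_mono) auto
        then show ?thesis using M0 by (simp add: k2_def)
      qed
      finally show "2 * V s * (- \<beta> * V s - g s * X s) + 2 * L * X s * V s
                + \<epsilon> * (V s * V s + X s * (- \<beta> * V s - g s * X s)) \<le> - k2 * W s" .
    qed
    have TT: "T' - t0 \<le> T" using T t0 by (simp add: T'_def)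
    have Ebd: "E t \<le> C * E t0 * exp (- k2 * (t - t0))"
    proof (cases "t \<le> T'")
      case True
      have "E t \<le> E t0 * exp (\<Lambda> * (t - t0))" by (rule ph1[OF tt0])
      also have "\<dots> \<le> E t0 * exp (\<Lambda> * T)"
        using True TT Lpos E0[of t0] by (intro mult_left_mono) (auto simp: \<Lambda>_def)
      also have "\<dots> \<le> E t0 * (M / m * exp (\<Lambda> * T) * (exp (k2 * T) * exp (- k2 * (t - t0))))"
      proof (intro mult_left_mono E0)
        have "1 \<le> exp (k2 * T) * exp (- k2 * (t - t0))"
          using True TT k20 by (simp flip: exp_add)
        then have "1 * 1 \<le> M / m * (exp (k2 * T) * exp (- k2 * (t - t0)))"
          using mM by (intro mult_mono) auto
        then have "exp (\<Lambda> * T) * 1 \<le> exp (\<Lambda> * T) * (M / m * (exp (k2 * T) * exp (- k2 * (t - t0))))"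
          by (intro mult_left_mono) auto
        then show "exp (\<Lambda> * T) \<le> M / m * exp (\<Lambda> * T) * (exp (k2 * T) * exp (- k2 * (t - t0)))"
          by (simp only: mult_1_right ac_simps)
      qed
      finally show ?thesis by (simp add: C_def algebra_simps)
    next
      case False
      then have tT: "T' \<le> t" by simp
      have "m * E t \<le> W t" by (rule WE(1))
      also have "\<dots> \<le> W T' * exp (- k2 * (t - T'))" by (rule ph2[OF tT])
      also have "\<dots> \<le> (M * E T') * exp (- k2 * (t - T'))"
        using WE(2)[of T'] by (intro mult_right_mono) auto
      also have "\<dots> \<le> (M * (E t0 * exp (\<Lambda> * T))) * exp (- k2 * (t - T'))"
      proof (intro mult_right_mono mult_left_mono)
        have "E T' \<le> E t0 * exp (\<Lambda> * (T' - t0))" by (rule ph1) (simp add: T'_def)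
        also have "\<dots> \<le> E t0 * exp (\<Lambda> * T)"
          using TT Lpos E0[of t0] by (intro mult_left_mono) (auto simp: \<Lambda>_def)
        finally show "E T' \<le> E t0 * exp (\<Lambda> * T)" .
      qed (use M0 in auto)
      also have "exp (- k2 * (t - T')) = exp (- k2 * (t - t0)) * exp (k2 * (T' - t0))"
        by (simp flip: exp_add add: algebra_simps)
      also have "\<dots> \<le> exp (- k2 * (t - t0)) * exp (k2 * T)"
        using TT k20 by (intro mult_left_mono) auto
      finally have "m * E t \<le> M * (E t0 * exp (\<Lambda> * T)) * (exp (- k2 * (t - t0)) * exp (k2 * T))"
        using M0 E0[of t0] by (simp add: mult_left_mono)
      then show ?thesis using m0 by (simp add: C_def field_simps)
    qed
    have nE: "norm (V s, X s) = sqrt (E s)" for s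
      by (simp add: norm_Pair E_def)
    have ex: "exp (- k2 * (t - t0)) = (exp (- (k2/2) * (t - t0)))^2"
      by (simp add: power2_eq_square flip: exp_add)
    have "norm (V t, X t) \<le> sqrt (C * E t0 * exp (- k2 * (t - t0)))"
      unfolding nE using Ebd by simp
    also have "\<dots> = sqrt C * exp (- (k2/2) * (t - t0)) * sqrt (E t0)"
      unfolding ex by (simp add: real_sqrt_mult)
    finally show "norm (V t, X t) \<le> sqrt C * exp (- (k2/2) * (t - t0)) * norm (V t0, X t0)"
      by (simp add: nE)
  qed
qed

end
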